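(* Let $G$ be a group, $s$ a central involution of $G$, $T$ a finite tree with at least one edge, and $\zeta\in G(L(T))$. Then there exists a $G$-phase $H$ of $T$ with $\Psi_L(H)=\zeta$ if and only if $\zeta\sim\mathbf{s}$.
   Context: A $G$-gain graph $(\Gamma,\psi)$ consists of a graph $\Gamma=(V_\Gamma,E_\Gamma)$ and a map $\psi$ assigning to each ordered pair $(u,v)$ of adjacent vertices an element of $G$ with $\psi(v,u)=\psi(u,v)^{-1}$; $G(\Gamma)$ is the set of such maps. For an involution $s$, $\mathbf{s}$ is the gain function constantly equal to $s$. Gain functions $\psi_1,\psi_2$ on $\Gamma$ are switching equivalent ($\psi_1\sim\psi_2$) if there is $f:V_\Gamma\to G$ with $\psi_2(u,v)=f(u)^{-1}\psi_1(u,v)f(v)$ for all adjacent $u,v$. The line graph $L(\Gamma)$ has vertex set $E_\Gamma$, two edges being adjacent iff they share an endpoint. With $V_\Gamma=\{v_1,\dots,v_n\}$, $E_\Gamma=\{e_1,\dots,e_m\}$, a $G$-phase of $\Gamma$ is a matrix $H=(H_{i,k})$ with $H_{i,k}\in G$ if $v_i\in e_k$ and $H_{i,k}=0$ otherwise. Given a fixed central involution $s$ of $G$, $\Psi_L(H)\in G(L(\Gamma))$ is defined by $\Psi_L(H)(e_p,e_q)=s\,(H_{r,p})^{-1}H_{r,q}$, where $v_r$ is the common endpoint of the adjacent edges $e_p,e_q$. *)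

theory Defs
  imports "HOL-Algebra.Group"
begin

definition simple_graph :: "'v set \<Rightarrow> 'v set set \<Rightarrow> bool" where
  "simple_graph V E \<longleftrightarrow> (\<forall>e\<in>E. \<exists>u v. e = {u, v} \<and> u \<noteq> v \<and> u \<in> V \<and> v \<in> V)"

definition graph_adj :: "'v set set \<Rightarrow> 'v \<Rightarrow> 'v \<Rightarrow> bool" where
  "graph_adj E u v \<longleftrightarrow> u \<noteq> v \<and> {u, v} \<in> E"

definition graph_connected :: "'v set \<Rightarrow> 'v set set \<Rightarrow> bool" where
  "graph_connected V E \<longleftrightarrow>
     (\<forall>u\<in>V. \<forall>v\<in>V. (u, v) \<in> {(x, y). graph_adj E x y}\<^sup>*)"

definition graph_has_cycle :: "'v set \<Rightarrow> 'v set set \<Rightarrow> bool" where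
  "graph_has_cycle V E \<longleftrightarrow>
     (\<exists>cs. length cs \<ge> 3 \<and> distinct cs \<and> set cs \<subseteq> V \<and>
        (\<forall>i. Suc i < length cs \<longrightarrow> graph_adj E (cs ! i) (cs ! Suc i)) \<and>
        graph_adj E (last cs) (hd cs))"

definition finite_tree :: "'v set \<Rightarrow> 'v set set \<Rightarrow> bool" where
  "finite_tree V E \<longleftrightarrow> finite V \<and> V \<noteq> {} \<and> simple_graph V E \<and>
     graph_connected V E \<and> \<not> graph_has_cycle V E"

definition line_edges :: "'v set set \<Rightarrow> 'v set set set" where
  "line_edges E = {{p, q} | p q. p \<in> E \<and> q \<in> E \<and> p \<noteq> q \<and> p \<inter> q \<noteq> {}}"

text \<open>The line graph L(V,E) has vertex set E and edge set line_edges E.\<close>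

text \<open>A G-gain function on the graph (V,E): a map on ordered pairs of adjacent vertices
  with values in G and psi(v,u) = psi(u,v)^{-1}; by convention it is undefined
  on non-adjacent pairs (so that gain functions are determined by their values on
  adjacent pairs).\<close>
definition gain_functions :: "('g, 'b) monoid_scheme \<Rightarrow> 'v set set \<Rightarrow> ('v \<Rightarrow> 'v \<Rightarrow> 'g) set" where
  "gain_functions G E = {\<psi>. (\<forall>u v. graph_adj E u v \<longrightarrow>
        \<psi> u v \<in> carrier G \<and> \<psi> v u = inv\<^bsub>G\<^esub> (\<psi> u v)) \<and>
      (\<forall>u v. \<not> graph_adj E u v \<longrightarrow> \<psi> u v = undefined)}"

definition const_gain :: "'v set set \<Rightarrow> 'g \<Rightarrow> 'v \<Rightarrow> 'v \<Rightarrow> 'g" where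
  "const_gain E s = (\<lambda>u v. if graph_adj E u v then s else undefined)"

definition switching_equiv ::
  "('g, 'b) monoid_scheme \<Rightarrow> 'v set \<Rightarrow> 'v set set \<Rightarrow> ('v \<Rightarrow> 'v \<Rightarrow> 'g) \<Rightarrow> ('v \<Rightarrow> 'v \<Rightarrow> 'g) \<Rightarrow> bool" where
  "switching_equiv G V E \<psi>1 \<psi>2 \<longleftrightarrow>
     (\<exists>f. (\<forall>v\<in>V. f v \<in> carrier G) \<and>
        (\<forall>u v. graph_adj E u v \<longrightarrow> \<psi>2 u v = inv\<^bsub>G\<^esub> (f u) \<otimes>\<^bsub>G\<^esub> \<psi>1 u v \<otimes>\<^bsub>G\<^esub> f v))"

text \<open>A G-phase of (V,E) is an incidence-indexed matrix H: H v e \<in> G whenever v \<in> e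
  (v \<in> V, e \<in> E).  The zero entries (v \<notin> e) play no role and are left unconstrained.\<close>
definition G_phase :: "('g, 'b) monoid_scheme \<Rightarrow> 'v set \<Rightarrow> 'v set set \<Rightarrow> ('v \<Rightarrow> 'v set \<Rightarrow> 'g) \<Rightarrow> bool" where
  "G_phase G V E H \<longleftrightarrow> (\<forall>v\<in>V. \<forall>e\<in>E. v \<in> e \<longrightarrow> H v e \<in> carrier G)"

definition Psi_L :: "('g, 'b) monoid_scheme \<Rightarrow> 'g \<Rightarrow> 'v set set \<Rightarrow> ('v \<Rightarrow> 'v set \<Rightarrow> 'g) \<Rightarrow> 'v set \<Rightarrow> 'v set \<Rightarrow> 'g" where
  "Psi_L G s E H = (\<lambda>p q. if graph_adj (line_edges E) p q then
       (let r = (THE r. r \<in> p \<inter> q) in s \<otimes>\<^bsub>G\<^esub> inv\<^bsub>G\<^esub> (H r p) \<otimes>\<^bsub>G\<^esub> H r q)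
     else undefined)"

definition central_involution :: "('g, 'b) monoid_scheme \<Rightarrow> 'g \<Rightarrow> bool" where
  "central_involution G s \<longleftrightarrow> s \<in> carrier G \<and> s \<noteq> \<one>\<^bsub>G\<^esub> \<and> s \<otimes>\<^bsub>G\<^esub> s = \<one>\<^bsub>G\<^esub> \<and>
     (\<forall>g\<in>carrier G. s \<otimes>\<^bsub>G\<^esub> g = g \<otimes>\<^bsub>G\<^esub> s)"

end

theory Submission
  imports Defs "HOL-Library.Transitive_Closure_Table"
begin

lemma cycle_mono:
  assumes "graph_has_cycle V E" "E \<subseteq> E'" shows "graph_has_cycle V E'"
  using assms unfolding graph_has_cycle_def graph_adj_def by blast

lemma no_path:
  assumes sg: "simple_graph V (insert e E')" and nc: "\<not> graph_has_cycle V (insert e E')"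
    and e: "e = {a, b}" "a \<noteq> b" "a \<in> V" "b \<in> V" and ne: "e \<notin> E'"
  shows "(b, a) \<notin> {(x, y). graph_adj E' x y}\<^sup>*"
proof
  assume "(b, a) \<in> {(x, y). graph_adj E' x y}\<^sup>*"
  hence "(graph_adj E')\<^sup>*\<^sup>* b a"
    unfolding rtrancl_def by simp
  then obtain xs0 where "rtrancl_path (graph_adj E') b xs0 a"
    using rtranclp_eq_rtrancl_path by metis
  then obtain xs where p: "rtrancl_path (graph_adj E') b xs a" and d: "distinct (b # xs)"
    using rtrancl_path_distinct by metis
  have xsne: "xs \<noteq> []" using p e(2) by (auto elim: rtrancl_path.cases)
  have lst: "last xs = a" using rtrancl_path_last[OF p xsne] .
  have adjE: "graph_adj E' x y \<Longrightarrow> y \<in> V" for x y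
    using sg unfolding simple_graph_def graph_adj_def by (metis doubleton_eq_iff insertCI)
  have setV: "set xs \<subseteq> V"
  proof
    fix z assume "z \<in> set xs"
    from rtrancl_path_Range[OF p this] show "z \<in> V" using adjE by blast
  qed
  have len: "length xs \<ge> 2"
  proof (rule ccontr)
    assume "\<not> length xs \<ge> 2"
    with xsne obtain y where "xs = [y]" by (cases xs; cases "tl xs") auto
    with lst have "xs = [a]" by simp
    with rtrancl_path_nth[OF p, of 0] have "graph_adj E' b a" by simp
    thus False using ne e(1) unfolding graph_adj_def by (auto simp: insert_commute)
  qed
  have "graph_has_cycle V (insert e E')"
    unfolding graph_has_cycle_def
  proof (intro exI[of _ "b # xs"] conjI allI impI)
    show "3 \<le> length (b # xs)" using len by simp
    show "distinct (b # xs)" by fact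
    show "set (b # xs) \<subseteq> V" using setV e by simp
    fix i assume "Suc i < length (b # xs)"
    hence "graph_adj E' ((b # xs) ! i) ((b # xs) ! Suc i)"
      using rtrancl_path_nth[OF p, of i] by simp
    thus "graph_adj (insert e E') ((b # xs) ! i) ((b # xs) ! Suc i)"
      unfolding graph_adj_def by blast
  next
    show "graph_adj (insert e E') (last (b # xs)) (hd (b # xs))"
      using lst xsne e unfolding graph_adj_def by (auto simp: insert_commute)
  qed
  with nc show False by simp
qed

lemma balance:
  fixes G (structure)
  assumes grp: "group G" and fin: "finite E"
    and sg: "simple_graph V E" and nc: "\<not> graph_has_cycle V E"
    and phi: "\<And>a b. graph_adj E a b \<Longrightarrow> \<phi> a b \<in> carrier G \<and> \<phi> b a = inv\<^bsub>G\<^esub> (\<phi> a b)"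
  shows "\<exists>k. (\<forall>x. k x \<in> carrier G) \<and> (\<forall>a b. graph_adj E a b \<longrightarrow> k b = k a \<otimes>\<^bsub>G\<^esub> \<phi> a b)"
  using fin sg nc phi
proof (induction E rule: finite_induct)
  case empty
  interpret group G by fact
  show ?case by (rule exI[of _ "\<lambda>_. \<one>\<^bsub>G\<^esub>"]) (auto simp: graph_adj_def)
next
  case (insert e E')
  interpret group G by fact
  have sg': "simple_graph V E'" using insert.prems(1) unfolding simple_graph_def by blast
  have nc': "\<not> graph_has_cycle V E'" using insert.prems(2) cycle_mono by blast
  have adjsub: "graph_adj E' x y \<Longrightarrow> graph_adj (insert e E') x y" for x y
    unfolding graph_adj_def by blast
  obtain k' where k': "\<forall>x. k' x \<in> carrier G" "\<forall>a b. graph_adj E' a b \<longrightarrow> k' b = k' a \<otimes> \<phi> a b"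
    using insert.IH[OF sg' nc'] insert.prems(3) adjsub by blast
  obtain a b where e: "e = {a, b}" "a \<noteq> b" "a \<in> V" "b \<in> V"
    using insert.prems(1) unfolding simple_graph_def by blast
  define R where "R = {(x, y). graph_adj E' x y}\<^sup>*"
  have nR: "(b, a) \<notin> R" unfolding R_def
    using no_path[OF insert.prems(1) insert.prems(2) e insert.hyps(2)] .
  have adjab: "graph_adj (insert e E') a b" using e unfolding graph_adj_def by simp
  have phab: "\<phi> a b \<in> carrier G" "\<phi> b a = inv (\<phi> a b)" using insert.prems(3)[OF adjab] by auto
  define c where "c = k' a \<otimes> \<phi> a b \<otimes> inv (k' b)"
  have cc: "c \<in> carrier G" unfolding c_def using k' phab by auto
  define k where "k x = (if (b, x) \<in> R then c \<otimes> k' x else k' x)" for x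
  have kc: "\<forall>x. k x \<in> carrier G" unfolding k_def using k' cc by auto
  have bR: "(b, b) \<in> R" unfolding R_def by simp
  have kb: "k b = k a \<otimes> \<phi> a b"
    using nR bR k' phab unfolding k_def c_def by (simp add: m_assoc)
  have ka: "k a = k b \<otimes> \<phi> b a"
    using kb kc phab by (simp add: m_assoc)
  show ?case
  proof (intro exI[of _ k] conjI allI impI)
    show "k x \<in> carrier G" for x using kc by blast
    fix x y assume adj: "graph_adj (insert e E') x y"
    show "k y = k x \<otimes> \<phi> x y"
    proof (cases "graph_adj E' x y")
      case True
      have "(b, x) \<in> R \<longleftrightarrow> (b, y) \<in> R"
      proof
        assume "(b, x) \<in> R" thus "(b, y) \<in> R" using True unfolding R_def
          by (simp add: rtrancl_into_rtrancl)
      next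
        have "graph_adj E' y x" using True unfolding graph_adj_def by (auto simp: insert_commute)
        moreover assume "(b, y) \<in> R"
        ultimately show "(b, x) \<in> R" unfolding R_def
          by (simp add: rtrancl_into_rtrancl)
      qed
      moreover have "k' y = k' x \<otimes> \<phi> x y" using k' True by blast
      moreover have "\<phi> x y \<in> carrier G" using insert.prems(3) adj by blast
      ultimately show ?thesis unfolding k_def using k' cc by (simp add: m_assoc)
    next
      case False
      with adj have "{x, y} = {a, b}" "x \<noteq> y" using e unfolding graph_adj_def by auto
      hence "(x = a \<and> y = b) \<or> (x = b \<and> y = a)" by (auto simp: doubleton_eq_iff)
      thus ?thesis using ka kb by auto
    qed
  qed
qed

lemma two_sets_common:
  assumes "p = {u, v}" "q = {w, x}" "p \<noteq> q" "r \<in> p \<inter> q" "r' \<in> p \<inter> q"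
  shows "r = r'"
proof (rule ccontr)
  assume ne: "r \<noteq> r'"
  have "p = {r, r'}" using assms(1,4,5) ne by blast
  moreover have "q = {r, r'}" using assms(2,4,5) ne by blast
  ultimately show False using assms(3) by simp
qed

lemma main_aux:
  fixes G :: "('g, 'b) monoid_scheme" (structure) and s :: 'g
    and V :: "'v set" and E :: "'v set set" and \<zeta> :: "'v set \<Rightarrow> 'v set \<Rightarrow> 'g"
  assumes "group G"
    and "central_involution G s"
    and "finite_tree V E"
    and "E \<noteq> {}"
    and "\<zeta> \<in> gain_functions G (line_edges E)"
  shows "(\<exists>H. G_phase G V E H \<and> Psi_L G s E H = \<zeta>) \<longleftrightarrow>
         switching_equiv G E (line_edges E) (const_gain (line_edges E) s) \<zeta>"
proof -
  interpret group G by fact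
  have ci: "s \<in> carrier G \<and> s \<noteq> \<one> \<and> s \<otimes> s = \<one> \<and> (\<forall>g\<in>carrier G. s \<otimes> g = g \<otimes> s)"
    using assms(2) unfolding central_involution_def .
  have sc: "s \<in> carrier G" using ci by (rule conjunct1)
  have scall: "\<forall>g\<in>carrier G. s \<otimes> g = g \<otimes> s" using ci by (elim conjE)
  have scomm: "s \<otimes> g = g \<otimes> s" if "g \<in> carrier G" for g
    using scall that by (rule bspec[where P="\<lambda>g. s \<otimes> g = g \<otimes> s"])
  have sg: "simple_graph V E" and nc: "\<not> graph_has_cycle V E" and finV: "finite V"
  proof -
    have ft: "finite V \<and> V \<noteq> {} \<and> simple_graph V E \<and> graph_connected V E \<and> \<not> graph_has_cycle V E"
      using assms(3) unfolding finite_tree_def .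
    from ft show "simple_graph V E" by (elim conjE)
    from ft show "\<not> graph_has_cycle V E" by (elim conjE)
    from ft show "finite V" by (elim conjE)
  qed
  have EV: "E \<subseteq> Pow V"
  proof
    fix e assume "e \<in> E"
    then obtain u v where "e = {u, v}" "u \<in> V" "v \<in> V" using sg unfolding simple_graph_def by blast
    thus "e \<in> Pow V" by simp
  qed
  have finE: "finite E" using finite_subset[OF EV] finV by simp
  have ladj: "p \<in> E \<and> q \<in> E \<and> p \<noteq> q \<and> (\<exists>r. p \<inter> q = {r})"
    if "graph_adj (line_edges E) p q" for p q
  proof -
    from that have pq: "p \<noteq> q" "{p, q} \<in> line_edges E" unfolding graph_adj_def by auto
    then obtain p' q' where "{p, q} = {p', q'}" "p' \<in> E" "q' \<in> E" "p' \<inter> q' \<noteq> {}"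
      unfolding line_edges_def by blast
    hence pE: "p \<in> E" "q \<in> E" "p \<inter> q \<noteq> {}" by (auto simp: doubleton_eq_iff)
    obtain u v where uv: "p = {u, v}" using pE(1) sg unfolding simple_graph_def by blast
    obtain w x where wx: "q = {w, x}" using pE(2) sg unfolding simple_graph_def by blast
    obtain r where r: "r \<in> p \<inter> q" using pE(3) by blast
    have "\<forall>r'\<in>p \<inter> q. r' = r"
    proof
      fix r' assume "r' \<in> p \<inter> q"
      thus "r' = r" using two_sets_common[OF uv wx pq(1) r] by blast
    qed
    with r have "p \<inter> q = {r}" by blast
    thus ?thesis using pE pq by blast
  qed
  have theR: "(THE r. r \<in> p \<inter> q) = r" if "p \<inter> q = {r}" for p q :: "'v set" and r
    using that by auto
  have zg: "\<zeta> p q = undefined" if "\<not> graph_adj (line_edges E) p q" for p q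
    using assms(5) that unfolding gain_functions_def by blast
  show ?thesis
  proof
    assume "\<exists>H. G_phase G V E H \<and> Psi_L G s E H = \<zeta>"
    then obtain H where H: "G_phase G V E H" "Psi_L G s E H = \<zeta>" by blast
    have Hc: "H r p \<in> carrier G" if "p \<in> E" "r \<in> p" for r p
      using H(1) that EV unfolding G_phase_def by blast
    define \<phi> where "\<phi> a b = H a {a, b} \<otimes> inv (H b {a, b})" for a b
    have "\<exists>k. (\<forall>x. k x \<in> carrier G) \<and> (\<forall>a b. graph_adj E a b \<longrightarrow> k b = k a \<otimes> \<phi> a b)"
    proof (rule balance[OF assms(1) finE sg nc])
      fix a b assume "graph_adj E a b"
      hence ab: "{a, b} \<in> E" "{b, a} = {a, b}" unfolding graph_adj_def by (auto simp: insert_commute)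
      have c1: "H a {a, b} \<in> carrier G" "H b {a, b} \<in> carrier G" using Hc ab by auto
      show "\<phi> a b \<in> carrier G \<and> \<phi> b a = inv (\<phi> a b)"
        unfolding \<phi>_def ab(2) using c1 by (simp add: inv_mult_group)
    qed
    then obtain k where k: "\<forall>x. k x \<in> carrier G" "\<forall>a b. graph_adj E a b \<longrightarrow> k b = k a \<otimes> \<phi> a b"
      by blast
    define f where "f p = k (SOME r. r \<in> p) \<otimes> H (SOME r. r \<in> p) p" for p
    have fr: "f p = k r \<otimes> H r p" if "p \<in> E" "r \<in> p" for p r
    proof -
      define t where "t = (SOME r. r \<in> p)"
      have t: "t \<in> p" unfolding t_def using that by (meson someI)
      show ?thesis
      proof (cases "t = r")
        case True thus ?thesis unfolding f_def t_def[symmetric] by simp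
      next
        case False
        have "\<exists>u v. p = {u, v} \<and> u \<noteq> v \<and> u \<in> V \<and> v \<in> V"
          using sg that(1) unfolding simple_graph_def by (rule bspec)
        then obtain u v where uv: "p = {u, v}" by blast
        have pe: "p = {t, r}"
        proof -
          have "t \<in> {u, v}" "r \<in> {u, v}" using t that(2) uv by simp_all
          thus ?thesis using uv False by blast
        qed
        hence "graph_adj E t r" using that False unfolding graph_adj_def by simp
        hence "k r = k t \<otimes> \<phi> t r" using k(2) by blast
        hence "k r = k t \<otimes> (H t p \<otimes> inv (H r p))" unfolding \<phi>_def pe[symmetric] .
        moreover have "H t p \<in> carrier G" "H r p \<in> carrier G" "k t \<in> carrier G"
          using Hc that t k(1) by auto
        ultimately have "k r \<otimes> H r p = k t \<otimes> H t p" by (simp add: m_assoc)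
        thus ?thesis unfolding f_def t_def[symmetric] by simp
      qed
    qed
    show "switching_equiv G E (line_edges E) (const_gain (line_edges E) s) \<zeta>"
      unfolding switching_equiv_def
    proof (intro exI[of _ f] conjI ballI allI impI)
      fix p assume "p \<in> E"
      then obtain r where "r \<in> p" using sg unfolding simple_graph_def by blast
      thus "f p \<in> carrier G" using fr[OF \<open>p \<in> E\<close> \<open>r \<in> p\<close>] Hc[OF \<open>p \<in> E\<close>] k(1) by auto
    next
      fix p q assume adj: "graph_adj (line_edges E) p q"
      obtain r where r: "p \<in> E" "q \<in> E" "p \<inter> q = {r}" using ladj[OF adj] by blast
      have rp: "r \<in> p" "r \<in> q" using r by auto
      have cs: "H r p \<in> carrier G" "H r q \<in> carrier G" "k r \<in> carrier G"
        using Hc r rp k(1) by auto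
      have "\<zeta> p q = s \<otimes> inv (H r p) \<otimes> H r q"
        using H(2)[symmetric] adj theR[OF r(3)] unfolding Psi_L_def by simp
      also have "\<dots> = inv (k r \<otimes> H r p) \<otimes> s \<otimes> (k r \<otimes> H r q)"
      proof -
        let ?A = "H r p" and ?B = "H r q" and ?K = "k r"
        have e0: "inv ?K \<otimes> s = s \<otimes> inv ?K" using scomm[of "inv ?K"] cs by simp
        have e1: "inv ?K \<otimes> (s \<otimes> (?K \<otimes> ?B)) = s \<otimes> ?B"
        proof -
          have "inv ?K \<otimes> (s \<otimes> (?K \<otimes> ?B)) = (inv ?K \<otimes> s) \<otimes> (?K \<otimes> ?B)"
            using cs sc by (simp add: m_assoc)
          also have "\<dots> = (s \<otimes> inv ?K) \<otimes> (?K \<otimes> ?B)" using e0 by simp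
          also have "\<dots> = s \<otimes> ((inv ?K \<otimes> ?K) \<otimes> ?B)" using cs sc by (simp only: m_assoc inv_closed m_closed)
          also have "\<dots> = s \<otimes> ?B" using cs by simp
          finally show ?thesis .
        qed
        have "inv (?K \<otimes> ?A) \<otimes> s \<otimes> (?K \<otimes> ?B) = inv ?A \<otimes> (inv ?K \<otimes> (s \<otimes> (?K \<otimes> ?B)))"
          using cs sc by (simp add: inv_mult_group m_assoc)
        also have "\<dots> = (inv ?A \<otimes> s) \<otimes> ?B" using e1 cs sc by (simp add: m_assoc)
        also have "\<dots> = (s \<otimes> inv ?A) \<otimes> ?B" using scomm[of "inv ?A"] cs by simp
        finally show ?thesis by simp
      qed
      also have "\<dots> = inv (f p) \<otimes> const_gain (line_edges E) s p q \<otimes> f q"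
        using fr r rp adj unfolding const_gain_def by simp
      finally show "\<zeta> p q = inv (f p) \<otimes> const_gain (line_edges E) s p q \<otimes> f q" .
    qed
  next
    assume "switching_equiv G E (line_edges E) (const_gain (line_edges E) s) \<zeta>"
    then obtain f where f: "\<forall>v\<in>E. f v \<in> carrier G"
      "\<forall>u v. graph_adj (line_edges E) u v \<longrightarrow>
         \<zeta> u v = inv (f u) \<otimes> const_gain (line_edges E) s u v \<otimes> f v"
      unfolding switching_equiv_def by blast
    define H where "H r p = f p" for r :: 'v and p
    have "G_phase G V E H" unfolding G_phase_def H_def using f by blast
    moreover have "Psi_L G s E H = \<zeta>"
    proof (intro ext)
      fix p q
      show "Psi_L G s E H p q = \<zeta> p q"
      proof (cases "graph_adj (line_edges E) p q")
        case True
        obtain r where r: "p \<in> E" "q \<in> E" using ladj[OF True] by blast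
        have c: "f p \<in> carrier G" "f q \<in> carrier G" using f r by auto
        have "\<zeta> p q = inv (f p) \<otimes> s \<otimes> f q" using f True unfolding const_gain_def by simp
        also have "\<dots> = s \<otimes> inv (f p) \<otimes> f q" using scomm[of "inv (f p)"] c by simp
        finally show ?thesis using True unfolding Psi_L_def H_def by (simp add: Let_def)
      next
        case False thus ?thesis using zg unfolding Psi_L_def by simp
      qed
    qed
    ultimately show "\<exists>H. G_phase G V E H \<and> Psi_L G s E H = \<zeta>" by blast
  qed
qed

theorem mainTheorem2:
  fixes G :: "('g, 'b) monoid_scheme" and s :: 'g
    and V :: "'v set" and E :: "'v set set" and \<zeta> :: "'v set \<Rightarrow> 'v set \<Rightarrow> 'g"
  assumes "group G"
    and "central_involution G s"
    and "finite_tree V E"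
    and "E \<noteq> {}"
    and "\<zeta> \<in> gain_functions G (line_edges E)"
  shows "(\<exists>H. G_phase G V E H \<and> Psi_L G s E H = \<zeta>) \<longleftrightarrow>
         switching_equiv G E (line_edges E) (const_gain (line_edges E) s) \<zeta>"
  using main_aux[OF assms] .

end
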